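(* Let $\gamma$ be a smooth curve in $\mathbb{R}^2\setminus\{0\}$, star-shaped with respect to the origin, with nowhere vanishing centroaffine curvature, and such that at no point of $\gamma$ does its osculating Kepler conic hyper-osculate (i.e. have contact of order at least 3 with $\gamma$). Then the osculating Kepler conics of $\gamma$ at any two distinct points are disjoint (equivalently, nested).
   Context: For $v=(a,b,c)\in\mathbb{R}^3$ with $c>0$, the Kepler conic $K(v)$ is the orthogonal projection to the $(x,y)$-plane of the intersection of the cone $x^2+y^2=z^2$ in $\mathbb{R}^3$ with the plane $ax+by+cz=1$; these are conics with a focus at the origin (ellipses when $-a^2-b^2+c^2>0$, parabolas when $=0$, hyperbolas when $<0$). A curve is star-shaped with respect to the origin if $[\gamma,\gamma']\neq0$, where $[u,v]$ is the $2\times2$ determinant; parametrizing so that $[\gamma,\gamma']=1$, the centroaffine curvature $p$ is defined by $\gamma''=-p\gamma$. The osculating Kepler conic at a point of $\gamma$ is the Kepler conic having contact of order at least 2 with $\gamma$ at that point. *)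

theory Defs
  imports "HOL-Analysis.Analysis"
begin

definition bracket :: "real \<times> real \<Rightarrow> real \<times> real \<Rightarrow> real" where
  "bracket u v = fst u * snd v - snd u * fst v"

fun vder :: "nat \<Rightarrow> (real \<Rightarrow> 'a::real_normed_vector) \<Rightarrow> real \<Rightarrow> 'a" where
  "vder 0 f = f"
| "vder (Suc n) f = (\<lambda>t. vector_derivative (vder n f) (at t))"

definition smooth_curve_on :: "real set \<Rightarrow> (real \<Rightarrow> 'a::real_normed_vector) \<Rightarrow> bool" where
  "smooth_curve_on I f \<longleftrightarrow> (\<forall>n. \<forall>t\<in>I. vder n f differentiable (at t))"

text \<open>Kepler conic K(v), v = (a,b,c) with c > 0: projection to the (x,y)-plane of the
  intersection of the cone x^2+y^2=z^2 with the plane ax+by+cz=1.\<close>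
definition kepler_conic :: "real \<times> real \<times> real \<Rightarrow> (real \<times> real) set" where
  "kepler_conic v = (case v of (a, b, c) \<Rightarrow>
     {(x, y). \<exists>z. x\<^sup>2 + y\<^sup>2 = z\<^sup>2 \<and> a * x + b * y + c * z = 1})"

text \<open>A defining polynomial of K(v) (for c > 0 its zero set is exactly K(v),
  see lemma below; it has nonvanishing gradient along K(v)).\<close>
definition kepler_poly :: "real \<times> real \<times> real \<Rightarrow> real \<times> real \<Rightarrow> real" where
  "kepler_poly v P = (case v of (a, b, c) \<Rightarrow> case P of (x, y) \<Rightarrow>
     (1 - a * x - b * y)\<^sup>2 - c\<^sup>2 * (x\<^sup>2 + y\<^sup>2))"

lemma kepler_poly_zero_iff:
  assumes "c > 0"
  shows "P \<in> kepler_conic (a, b, c) \<longleftrightarrow> kepler_poly (a, b, c) P = 0"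
proof (cases P)
  case (Pair x y)
  have "(\<exists>z. x\<^sup>2 + y\<^sup>2 = z\<^sup>2 \<and> a * x + b * y + c * z = 1)
        \<longleftrightarrow> x\<^sup>2 + y\<^sup>2 = ((1 - a * x - b * y) / c)\<^sup>2"
  proof
    assume "\<exists>z. x\<^sup>2 + y\<^sup>2 = z\<^sup>2 \<and> a * x + b * y + c * z = 1"
    then obtain z where "x\<^sup>2 + y\<^sup>2 = z\<^sup>2" "a * x + b * y + c * z = 1" by blast
    moreover have "z = (1 - a * x - b * y) / c" using calculation(2) assms
      by (simp add: field_simps)
    ultimately show "x\<^sup>2 + y\<^sup>2 = ((1 - a * x - b * y) / c)\<^sup>2" by simp
  next
    assume "x\<^sup>2 + y\<^sup>2 = ((1 - a * x - b * y) / c)\<^sup>2"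
    then show "\<exists>z. x\<^sup>2 + y\<^sup>2 = z\<^sup>2 \<and> a * x + b * y + c * z = 1"
      using assms by (intro exI[of _ "(1 - a * x - b * y) / c"]) (simp add: field_simps)
  qed
  also have "\<dots> \<longleftrightarrow> (1 - a * x - b * y)\<^sup>2 - c\<^sup>2 * (x\<^sup>2 + y\<^sup>2) = 0"
    using assms by (auto simp: field_simps power_divide)
  finally show ?thesis using Pair by (simp add: kepler_conic_def kepler_poly_def)
qed

definition kepler_contact ::
  "real \<times> real \<times> real \<Rightarrow> (real \<Rightarrow> real \<times> real) \<Rightarrow> real \<Rightarrow> nat \<Rightarrow> bool" where
  "kepler_contact v g t k \<longleftrightarrow> (\<forall>j\<le>k. vder j (\<lambda>s. kepler_poly v (g s)) t = 0)"

definition osculating_kepler :: "real \<times> real \<times> real \<Rightarrow> (real \<Rightarrow> real \<times> real) \<Rightarrow> real \<Rightarrow> bool" where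
  "osculating_kepler v g t \<longleftrightarrow> snd (snd v) > 0 \<and> kepler_contact v g t 2"

definition hyperosculating_kepler :: "real \<times> real \<times> real \<Rightarrow> (real \<Rightarrow> real \<times> real) \<Rightarrow> real \<Rightarrow> bool" where
  "hyperosculating_kepler v g t \<longleftrightarrow> snd (snd v) > 0 \<and> kepler_contact v g t 3"

end

theory Submission
  imports Defs
begin


lemma hvd_fst:
  assumes "(f has_vector_derivative f') (at x)"
  shows "((\<lambda>s. fst (f s)) has_real_derivative fst f') (at x)"
  using has_derivative_fst[OF assms[unfolded has_vector_derivative_def]]
  by (simp add: has_field_derivative_def mult_commute_abs)

lemma hvd_snd:
  assumes "(f has_vector_derivative f') (at x)"
  shows "((\<lambda>s. snd (f s)) has_real_derivative snd f') (at x)"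
  using has_derivative_snd[OF assms[unfolded has_vector_derivative_def]]
  by (simp add: has_field_derivative_def mult_commute_abs)

lemma vder_step:
  assumes "open I" "\<And>s. s\<in>I \<Longrightarrow> vder k f s = (F s::real)"
    "\<And>s. s\<in>I \<Longrightarrow> (F has_real_derivative F' s) (at s)" "s \<in> I"
  shows "vder (Suc k) f s = F' s"
proof -
  have "(vder k f has_real_derivative F' s) (at s)"
    by (rule has_field_derivative_transform_within_open[OF assms(3)[OF assms(4)] assms(1) assms(4)])
       (simp add: assms(2))
  then show ?thesis
    by (simp add: vector_derivative_at has_real_derivative_iff_has_vector_derivative)
qed

lemma deriv_const_on_open:
  assumes "open S" "t \<in> S" "\<And>s. s\<in>S \<Longrightarrow> f s = (k::real)" "(f has_real_derivative D) (at t)"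
  shows "D = 0"
proof -
  have "((\<lambda>s. k) has_real_derivative D) (at t)"
    by (rule has_field_derivative_transform_within_open[OF assms(4) assms(1,2)]) (simp add: assms(3))
  then show ?thesis using DERIV_const DERIV_unique by blast
qed

locale kc =
  fixes \<gamma> :: "real \<Rightarrow> real \<times> real" and p :: "real \<Rightarrow> real" and I :: "real set"
  assumes I_open: "open I" and I_interval: "is_interval I"
    and smooth: "smooth_curve_on I \<gamma>"
    and nonzero: "\<forall>t\<in>I. \<gamma> t \<noteq> 0"
    and cp: "\<forall>t\<in>I. bracket (\<gamma> t) (vder 1 \<gamma> t) = 1"
    and curv: "\<forall>t\<in>I. vder 2 \<gamma> t = - (p t) *\<^sub>R \<gamma> t"
    and pnz: "\<forall>t\<in>I. p t \<noteq> 0"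
    and nohyp: "\<forall>t\<in>I. \<forall>v. \<not> hyperosculating_kepler v \<gamma> t"
begin

definition "X k s = fst (vder k \<gamma> s)"
definition "Y k s = snd (vder k \<gamma> s)"
definition "R0 s = sqrt ((X 0 s)^2 + (Y 0 s)^2)"
definition "R1 s = (X 0 s * X 1 s + Y 0 s * Y 1 s) / R0 s"
definition "R2 s = ((X 1 s)^2 + (Y 1 s)^2 + X 0 s * X 2 s + Y 0 s * Y 2 s - (R1 s)^2) / R0 s"
definition "R3 s = (3*(X 1 s * X 2 s + Y 1 s * Y 2 s) + X 0 s * X 3 s + Y 0 s * Y 3 s - 3 * R1 s * R2 s) / R0 s"

lemma vder_hvd: "s \<in> I \<Longrightarrow> (vder k \<gamma> has_vector_derivative vder (Suc k) \<gamma> s) (at s)"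
  using smooth unfolding smooth_curve_on_def by (simp add: vector_derivative_works[symmetric])

lemma X_deriv: "s \<in> I \<Longrightarrow> (X k has_real_derivative X (Suc k) s) (at s)"
  unfolding X_def[abs_def] by (rule hvd_fst[OF vder_hvd])

lemma Y_deriv: "s \<in> I \<Longrightarrow> (Y k has_real_derivative Y (Suc k) s) (at s)"
  unfolding Y_def[abs_def] by (rule hvd_snd[OF vder_hvd])

lemma X_cont: "s \<in> I \<Longrightarrow> isCont (X k) s"
  using X_deriv DERIV_isCont by blast
lemma Y_cont: "s \<in> I \<Longrightarrow> isCont (Y k) s"
  using Y_deriv DERIV_isCont by blast

lemma sq_pos: "s \<in> I \<Longrightarrow> (X 0 s)^2 + (Y 0 s)^2 > 0"
proof -
  assume s: "s \<in> I"
  have "\<gamma> s \<noteq> 0" using nonzero s by auto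
  then have "X 0 s \<noteq> 0 \<or> Y 0 s \<noteq> 0" unfolding X_def Y_def by (cases "\<gamma> s") (auto simp: zero_prod_def)
  then show ?thesis by (auto simp: add_pos_nonneg add_nonneg_pos)
qed

lemma R0_pos: "s \<in> I \<Longrightarrow> R0 s > 0"
  unfolding R0_def using sq_pos by simp

lemma R0_sq: "(R0 s)^2 = (X 0 s)^2 + (Y 0 s)^2"
  unfolding R0_def by simp

lemma bracket1: "s \<in> I \<Longrightarrow> X 0 s * Y 1 s - Y 0 s * X 1 s = 1"
  using cp unfolding bracket_def X_def Y_def by auto

lemma curvX: "s \<in> I \<Longrightarrow> X 2 s = - p s * X 0 s"
  using curv unfolding X_def by auto
lemma curvY: "s \<in> I \<Longrightarrow> Y 2 s = - p s * Y 0 s"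
  using curv unfolding Y_def by auto

end


lemma r2_alg:
  fixes x0 y0 x1 y1 r0 r1 r2 P :: real
  assumes "r0 > 0" "r0^2 = x0^2+y0^2" "x0*y1 - y0*x1 = 1" "r1 = (x0*x1+y0*y1)/r0"
    "r2 = (x1^2+y1^2+x0*(-P*x0)+y0*(-P*y0) - r1^2)/r0"
  shows "r2 * r0^3 = 1 - P * r0^4"
proof -
  have "r2 * r0^3 = r0^2 * (x1^2+y1^2) - P*r0^2*(x0^2+y0^2) - (r1*r0)^2"
    using assms(1) unfolding assms(5) by (simp add: field_simps power2_eq_square power3_eq_cube)
  also have "r1 * r0 = x0*x1+y0*y1" using assms(1,4) by simp
  also have "r0^2 * (x1^2+y1^2) - P*r0^2*(x0^2+y0^2) - (x0*x1+y0*y1)^2 = (x0*y1 - y0*x1)^2 - P * (r0^2)^2"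
    unfolding assms(2) by (simp add: power2_eq_square power4_eq_xxxx algebra_simps)
  finally show ?thesis using assms(3) by (simp add: power4_eq_xxxx power2_eq_square)
qed

lemma ident_alg:
  fixes x0 y0 x1 y1 r0 r1 r2 P U1 U2 U3 :: real
  assumes "r0 > 0" "r0^2 = x0^2+y0^2" "x0*y1 - y0*x1 = 1" "r1 = (x0*x1+y0*y1)/r0"
    "r2 = (x1^2+y1^2+x0*(-P*x0)+y0*(-P*y0) - r1^2)/r0"
    "U3 = -((-P*x0)*x0 + (-P*y0)*y0)*r0" "U1 = (1 - U3*r0)*y1 + U3*r1*y0" "U2 = -(1-U3*r0)*x1 - U3*r1*x0"
  shows "U1*x0+U2*y0+U3*r0 = 1" "U1*x1+U2*y1+U3*r1 = 0" "U1*(-P*x0)+U2*(-P*y0)+U3*r2 = 0"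
proof -
  have A: "U1*x0+U2*y0 = (1 - U3*r0) * (x0*y1 - y0*x1)" unfolding assms(7,8) by (simp add: algebra_simps)
  then show "U1*x0+U2*y0+U3*r0 = 1" using assms(3) by simp
  have "U1*x1+U2*y1 = - U3*r1 * (x0*y1 - y0*x1)" unfolding assms(7,8) by (simp add: algebra_simps)
  then show "U1*x1+U2*y1+U3*r1 = 0" using assms(3) by simp
  have "U3 = P * (x0^2+y0^2) * r0" unfolding assms(6) by (simp add: power2_eq_square algebra_simps)
  then have u3: "U3 = P * r0^3" unfolding assms(2)[symmetric] by (simp add: power2_eq_square power3_eq_cube)
  have r2: "r2 * r0^3 = 1 - P * r0^4" by (rule r2_alg[OF assms(1-5)])
  have "U1*(-P*x0)+U2*(-P*y0)+U3*r2 = -P*(U1*x0+U2*y0) + U3*r2" by (simp add: algebra_simps)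
  also have "\<dots> = -P*(1 - U3*r0) + U3*r2" using A assms(3) by simp
  also have "\<dots> = -P + P*P*(r0^3*r0) + P*(r2*r0^3)" unfolding u3 by (simp add: algebra_simps)
  also have "\<dots> = 0" unfolding r2 by (simp add: algebra_simps power4_eq_xxxx power3_eq_cube)
  finally show "U1*(-P*x0)+U2*(-P*y0)+U3*r2 = 0" .
qed

lemma d_alg:
  fixes x0 y0 x1 y1 r0 r1 e1 e2 e3 :: real
  assumes "r0 > 0" "x0*y1 - y0*x1 = 1" "r1 = (x0*x1+y0*y1)/r0"
    "e1*x0+e2*y0+e3*r0 = 0" "e1*x1+e2*y1+e3*r1 = 0" "r0*r0 = x0*x0+y0*y0"
  shows "e1 = -e3*x0/r0" "e2 = -e3*y0/r0"
proof -
  have h1: "e1*x0+e2*y0 = -e3*r0" using assms(4) by linarith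
  have h2: "e1*x1+e2*y1 = -e3*r1" using assms(5) by linarith
  have "e1 * (x0*y1 - y0*x1) = (e1*x0+e2*y0)*y1 - (e1*x1+e2*y1)*y0" by (simp add: algebra_simps)
  also have "\<dots> = e3 * (r1*y0 - r0*y1)" unfolding h1 h2 by (simp add: algebra_simps)
  finally have a: "e1 = e3 * (r1*y0 - r0*y1)" using assms(2) by simp
  have "e2 * (x0*y1 - y0*x1) = (e1*x1+e2*y1)*x0 - (e1*x0+e2*y0)*x1" by (simp add: algebra_simps)
  also have "\<dots> = e3 * (r0*x1 - r1*x0)" unfolding h1 h2 by (simp add: algebra_simps)
  finally have b: "e2 = e3 * (r0*x1 - r1*x0)" using assms(2) by simp
  have r1: "r1 * r0 = x0*x1+y0*y1" using assms(1,3) by simp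
  have "(r1*y0 - r0*y1) * r0 = (r1 * r0)*y0 - r0*r0*y1" by (simp add: algebra_simps)
  also have "\<dots> = - x0 * (x0*y1 - y0*x1)" unfolding r1 assms(6) by (simp add: algebra_simps)
  finally have c: "(r1*y0 - r0*y1) * r0 = -x0" using assms(2) by simp
  have "(r0*x1 - r1*x0) * r0 = r0*r0*x1 - (r1 * r0)*x0" by (simp add: algebra_simps)
  also have "\<dots> = - y0 * (x0*y1 - y0*x1)" unfolding r1 assms(6) by (simp add: algebra_simps)
  finally have d: "(r0*x1 - r1*x0) * r0 = -y0" using assms(2) by simp
  have "r1*y0 - r0*y1 = -x0/r0" using c assms(1) by (simp add: field_simps)
  then show "e1 = -e3*x0/r0" using a by simp
  have "r0*x1 - r1*x0 = -y0/r0" using d assms(1) by (simp add: field_simps)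
  then show "e2 = -e3*y0/r0" using b by simp
qed

lemma uniq_alg:
  fixes x0 y0 r0 r2 P e1 e2 e3 :: real
  assumes "r0 > 0" "e1*x0+e2*y0+e3*r0 = 0" "e1*(-P*x0) + e2*(-P*y0) + e3*r2 = 0" "r2*r0^3 = 1 - P*r0^4"
  shows "e3 = 0"
proof -
  have "e3*r2 = P*(e1*x0+e2*y0)" using assms(3) by (simp add: algebra_simps)
  also have "e1*x0+e2*y0 = - e3*r0" using assms(2) by linarith
  then have "P*(e1*x0+e2*y0) = - P*e3*r0" by simp
  finally have h: "e3*r2 = - P*e3*r0" using \<open>P*(e1*x0+e2*y0) = - P*e3*r0\<close> by simp
  have "e3 * (r2*r0^3) = (e3*r2)*r0^3" by simp
  also have "\<dots> = - (e3 * (P*r0^4))" unfolding h by (simp add: power3_eq_cube power4_eq_xxxx)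
  finally have "e3 * (r2*r0^3) + e3 * (P*r0^4) = 0" by simp
  then have "e3 * (r2*r0^3 + P*r0^4) = 0" by (simp add: algebra_simps)
  then show ?thesis using assms(4) by simp
qed

lemma const_sign:
  fixes f :: "real \<Rightarrow> real"
  assumes "a \<le> b" "continuous_on {a..b} f" "\<forall>x\<in>{a..b}. f x \<noteq> 0"
  shows "(\<forall>x\<in>{a..b}. f x > 0) \<or> (\<forall>x\<in>{a..b}. f x < 0)"
proof (rule ccontr)
  assume "\<not> ?thesis"
  then obtain x1 x2 where x0: "x1 \<in> {a..b}" "x2 \<in> {a..b}" "\<not> f x1 > 0" "\<not> f x2 < 0"
    by blast
  have x: "x1 \<in> {a..b}" "x2 \<in> {a..b}" "f x1 < 0" "f x2 > 0"
    using x0 assms(3) by (auto simp: not_less order.order_iff_strict)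
  have ex: "\<exists>z\<in>{a..b}. f z = 0"
  proof (cases "x1 \<le> x2")
    case True
    have "continuous_on {x1..x2} f" using assms(2) x by (auto intro: continuous_on_subset)
    then obtain z where "x1 \<le> z" "z \<le> x2" "f z = 0" using IVT'[of f x1 0 x2] x True by auto
    then show ?thesis using x by auto
  next
    case False
    have "continuous_on {x2..x1} (\<lambda>t. - f t)" using assms(2) x False
      by (auto intro!: continuous_intros intro: continuous_on_subset)
    then obtain z where "x2 \<le> z" "z \<le> x1" "- f z = 0" using IVT'[of "\<lambda>t. - f t" x2 0 x1] x False by auto
    then show ?thesis using x by auto
  qed
  then show False using assms(3) by auto
qed

lemma strict_incr:
  fixes G D :: "real \<Rightarrow> real"
  assumes "a < b" "\<And>s. s \<in> {a..b} \<Longrightarrow> (G has_real_derivative D s) (at s)"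
    "\<And>s. s \<in> {a..b} \<Longrightarrow> D s \<ge> 0" "\<exists>s\<in>{a<..<b}. D s \<noteq> 0"
  shows "G a < G b"
proof (rule ccontr)
  assume "\<not> G a < G b"
  have mono: "G u \<le> G v" if "a \<le> u" "u \<le> v" "v \<le> b" for u v
  proof (rule DERIV_nonneg_imp_nondecreasing[OF that(2)])
    fix z assume "u \<le> z" "z \<le> v"
    then have z: "z \<in> {a..b}" using that by auto
    show "\<exists>y. DERIV G z :> y \<and> y \<ge> 0" using assms(2)[OF z] assms(3)[OF z] by blast
  qed
  have eq: "G s = G a" if "s \<in> {a<..<b}" for s
  proof -
    have "G a \<le> G s" "G s \<le> G b" "G a \<le> G b" using mono[of a s] mono[of s b] mono[of a b] that assms(1) by auto
    then show ?thesis using \<open>\<not> G a < G b\<close> by linarith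
  qed
  obtain s0 where s0: "s0 \<in> {a<..<b}" "D s0 \<noteq> 0" using assms(4) by blast
  have "D s0 = 0"
    by (rule deriv_const_on_open[OF open_greaterThanLessThan s0(1) eq assms(2)]) (use s0(1) in auto)
  then show False using s0 by simp
qed

lemma lagrange: "((x0::real)*x + y0*y)^2 + (x0*y - y0*x)^2 = (x0^2+y0^2)*(x^2+y^2)"
  by (simp add: power2_eq_square algebra_simps)

lemma xy_zero:
  fixes x y x0 y0 x1 y1 :: real
  assumes "x0*y - y0*x = 0" "x1*y - y1*x = 0" "x0*y1 - y0*x1 = 1"
  shows "x = 0 \<and> y = 0"
proof -
  have "x = x*(x0*y1 - y0*x1)" by (simp only: assms(3) mult_1_right)
  also have "\<dots> = x1*(x0*y - y0*x) - x0*(x1*y - y1*x)" by (simp add: algebra_simps)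
  finally have a: "x = 0" using assms(1,2) by simp
  have "y = y*(x0*y1 - y0*x1)" by (simp only: assms(3) mult_1_right)
  also have "\<dots> = y1*(x0*y - y0*x) - y0*(x1*y - y1*x)" by (simp add: algebra_simps)
  finally have "y = 0" using assms(1,2) by simp
  with a show ?thesis by simp
qed

lemma qalg: "(r::real) \<noteq> 0 \<Longrightarrow> (-d*x0/r)*x + (-d*y0/r)*y + d*\<rho> = d*(\<rho> - (x0*x+y0*y)/r)"
  by (simp add: divide_simps) (simp add: algebra_simps)
lemma qalg2: "(r::real) \<noteq> 0 \<Longrightarrow> (-d*x0/r)*x + (-d*y0/r)*y - d*\<rho> = - d*(\<rho> + (x0*x+y0*y)/r)"
  by (simp add: divide_simps) (simp add: algebra_simps)


lemma cs_gen:
  fixes a b r x y :: real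
  assumes "r > 0" "r^2 = a^2 + b^2"
  shows "\<bar>(a * x + b * y) / r\<bar> \<le> sqrt (x^2 + y^2)"
proof -
  have l: "(a * x + b * y)^2 + (a * y - b * x)^2 = (a^2 + b^2) * (x^2 + y^2)"
    by (rule lagrange)
  have "0 \<le> (a * y - b * x)^2" by simp
  then have "(a * x + b * y)^2 \<le> (a^2 + b^2) * (x^2 + y^2)" using l by linarith
  also have "\<dots> = (r * sqrt (x^2+y^2))^2" unfolding power_mult_distrib assms(2) by simp
  finally have "(a * x + b * y)^2 \<le> (r * sqrt (x^2+y^2))^2" .
  then have "\<bar>a * x + b * y\<bar> \<le> \<bar>r * sqrt (x^2+y^2)\<bar>"
    by (simp only: abs_le_square_iff)
  moreover have "\<bar>r * sqrt (x^2+y^2)\<bar> = r * sqrt (x^2+y^2)"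
    using assms(1) by (intro abs_of_nonneg mult_nonneg_nonneg) auto
  ultimately have "\<bar>a * x + b * y\<bar> \<le> r * sqrt (x^2+y^2)" by simp
  moreover have "\<bar>(a * x + b * y) / r\<bar> = \<bar>a * x + b * y\<bar> / r"
    by (simp only: abs_divide abs_of_pos[OF assms(1)])
  ultimately show ?thesis using assms(1) by (simp only: pos_divide_le_eq mult.commute)
qed

context kc begin
lemma dsq: assumes "s \<in> I" shows "((\<lambda>x. (X 0 x)^2 + (Y 0 x)^2) has_real_derivative (2*X 0 s*X 1 s + 2*Y 0 s * Y 1 s)) (at s)"
proof -
  have a: "((\<lambda>x. (X 0 x)^2) has_real_derivative (2*X 0 s*X 1 s)) (at s)"
    by (rule DERIV_cong[OF DERIV_power[OF X_deriv[OF assms, of 0], of 2]]) simp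
  have b: "((\<lambda>x. (Y 0 x)^2) has_real_derivative (2*Y 0 s*Y 1 s)) (at s)"
    by (rule DERIV_cong[OF DERIV_power[OF Y_deriv[OF assms, of 0], of 2]]) simp
  show ?thesis using DERIV_add[OF a b] by simp
qed
lemma R0_deriv: assumes "s \<in> I" shows "(R0 has_real_derivative R1 s) (at s)"
proof -
  have p: "(X 0 s)^2 + (Y 0 s)^2 > 0" using sq_pos assms .
  have "(R0 has_real_derivative (inverse (sqrt ((X 0 s)^2 + (Y 0 s)^2)) / 2) * (2*X 0 s*X 1 s + 2*Y 0 s * Y 1 s)) (at s)"
    unfolding R0_def[abs_def] by (rule DERIV_chain2[OF DERIV_real_sqrt[OF p] dsq[OF assms]])
  moreover have "(inverse (sqrt ((X 0 s)^2 + (Y 0 s)^2)) / 2) * (2*X 0 s*X 1 s + 2*Y 0 s * Y 1 s) = R1 s"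
    unfolding R1_def R0_def divide_inverse by (simp add: ring_distribs mult_ac)
  ultimately show ?thesis by simp
qed

lemma Xm: assumes "s \<in> I" shows "((\<lambda>x. X i x * X j x) has_real_derivative X (Suc i) s * X j s + X i s * X (Suc j) s) (at s)"
  by (rule DERIV_cong[OF DERIV_mult[OF X_deriv[OF assms] X_deriv[OF assms]]]) simp
lemma Ym: assumes "s \<in> I" shows "((\<lambda>x. Y i x * Y j x) has_real_derivative Y (Suc i) s * Y j s + Y i s * Y (Suc j) s) (at s)"
  by (rule DERIV_cong[OF DERIV_mult[OF Y_deriv[OF assms] Y_deriv[OF assms]]]) simp

lemma quot_alg: "(r::real) \<noteq> 0 \<Longrightarrow> (S*r - n*e)/(r*r) = (S - (n/r)*e)/r"
  by (simp add: field_simps power2_eq_square)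

lemma R1_deriv: assumes "s \<in> I" shows "(R1 has_real_derivative R2 s) (at s)"
proof -
  have r: "R0 s \<noteq> 0" using R0_pos[OF assms] by simp
  have n: "((\<lambda>x. X 0 x * X 1 x + Y 0 x * Y 1 x) has_real_derivative
     (X 1 s * X 1 s + X 0 s * X 2 s) + (Y 1 s * Y 1 s + Y 0 s * Y 2 s)) (at s)"
    using DERIV_add[OF Xm[OF assms, of 0 1] Ym[OF assms, of 0 1]] by (simp add: numeral_2_eq_2)
  have "(R1 has_real_derivative (((X 1 s * X 1 s + X 0 s * X 2 s) + (Y 1 s * Y 1 s + Y 0 s * Y 2 s)) * R0 s - (X 0 s * X 1 s + Y 0 s * Y 1 s) * R1 s) / (R0 s * R0 s)) (at s)"
    unfolding R1_def[abs_def] by (rule DERIV_cong[OF DERIV_divide[OF n R0_deriv[OF assms] r]]) (simp add: R1_def)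
  moreover have "(((X 1 s * X 1 s + X 0 s * X 2 s) + (Y 1 s * Y 1 s + Y 0 s * Y 2 s)) * R0 s - (X 0 s * X 1 s + Y 0 s * Y 1 s) * R1 s) / (R0 s * R0 s) = R2 s"
    unfolding quot_alg[OF r] R1_def[of s, symmetric] by (simp add: R2_def power2_eq_square)
  ultimately show ?thesis by simp
qed

lemma R2_deriv: assumes "s \<in> I" shows "(R2 has_real_derivative R3 s) (at s)"
proof -
  have r: "R0 s \<noteq> 0" using R0_pos[OF assms] by simp
  have a: "((\<lambda>x. (X 1 x)^2) has_real_derivative (2*X 1 s*X 2 s)) (at s)"
    by (rule DERIV_cong[OF DERIV_power[OF X_deriv[OF assms, of 1], of 2]]) (simp add: numeral_2_eq_2)
  have b: "((\<lambda>x. (Y 1 x)^2) has_real_derivative (2*Y 1 s*Y 2 s)) (at s)"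
    by (rule DERIV_cong[OF DERIV_power[OF Y_deriv[OF assms, of 1], of 2]]) (simp add: numeral_2_eq_2)
  have c: "((\<lambda>x. (R1 x)^2) has_real_derivative (2*R1 s*R2 s)) (at s)"
    by (rule DERIV_cong[OF DERIV_power[OF R1_deriv[OF assms], of 2]]) simp
  have n: "((\<lambda>x. (X 1 x)^2 + (Y 1 x)^2 + X 0 x * X 2 x + Y 0 x * Y 2 x - (R1 x)^2) has_real_derivative
     2*X 1 s*X 2 s + 2*Y 1 s*Y 2 s + (X 1 s * X 2 s + X 0 s * X 3 s) + (Y 1 s * Y 2 s + Y 0 s * Y 3 s) - 2*R1 s*R2 s) (at s)"
    using DERIV_diff[OF DERIV_add[OF DERIV_add[OF DERIV_add[OF a b] Xm[OF assms, of 0 2]] Ym[OF assms, of 0 2]] c]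
    by (simp add: numeral_3_eq_3 numeral_2_eq_2)
  have "(R2 has_real_derivative ((2*X 1 s*X 2 s + 2*Y 1 s*Y 2 s + (X 1 s * X 2 s + X 0 s * X 3 s) + (Y 1 s * Y 2 s + Y 0 s * Y 3 s) - 2*R1 s*R2 s) * R0 s
      - ((X 1 s)^2 + (Y 1 s)^2 + X 0 s * X 2 s + Y 0 s * Y 2 s - (R1 s)^2) * R1 s) / (R0 s * R0 s)) (at s)"
    unfolding R2_def[abs_def] by (rule DERIV_cong[OF DERIV_divide[OF n R0_deriv[OF assms] r]]) (simp add: R2_def)
  moreover have "((2*X 1 s*X 2 s + 2*Y 1 s*Y 2 s + (X 1 s * X 2 s + X 0 s * X 3 s) + (Y 1 s * Y 2 s + Y 0 s * Y 3 s) - 2*R1 s*R2 s) * R0 s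
      - ((X 1 s)^2 + (Y 1 s)^2 + X 0 s * X 2 s + Y 0 s * Y 2 s - (R1 s)^2) * R1 s) / (R0 s * R0 s) = R3 s"
    unfolding quot_alg[OF r] R2_def[symmetric] R3_def by (simp add: algebra_simps)
  ultimately show ?thesis by simp
qed

definition "u3 s = -(X 2 s * X 0 s + Y 2 s * Y 0 s) * R0 s"
definition "u1 s = (1 - u3 s * R0 s) * Y 1 s + u3 s * R1 s * Y 0 s"
definition "u2 s = -(1 - u3 s * R0 s) * X 1 s - u3 s * R1 s * X 0 s"
definition "d3 s = -((X 3 s * X 0 s + X 2 s * X 1 s) + (Y 3 s * Y 0 s + Y 2 s * Y 1 s)) * R0 s - (X 2 s * X 0 s + Y 2 s * Y 0 s) * R1 s"

lemma u3_deriv: assumes "s \<in> I" shows "(u3 has_real_derivative d3 s) (at s)"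
proof -
  have n: "((\<lambda>x. X 2 x * X 0 x + Y 2 x * Y 0 x) has_real_derivative
     (X 3 s * X 0 s + X 2 s * X 1 s) + (Y 3 s * Y 0 s + Y 2 s * Y 1 s)) (at s)"
    using DERIV_add[OF Xm[OF assms, of 2 0] Ym[OF assms, of 2 0]] by (simp add: numeral_3_eq_3 numeral_2_eq_2)
  show ?thesis unfolding u3_def[abs_def]
    by (rule DERIV_cong[OF DERIV_mult[OF DERIV_minus[OF n] R0_deriv[OF assms]]]) (simp add: d3_def algebra_simps)
qed

lemma u3_cont: "s \<in> I \<Longrightarrow> isCont u3 s"
  using u3_deriv DERIV_isCont by blast

lemma R0_cont: "s \<in> I \<Longrightarrow> isCont R0 s"
  using R0_deriv DERIV_isCont by blast
lemma R1_cont: "s \<in> I \<Longrightarrow> isCont R1 s"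
  using R1_deriv DERIV_isCont by blast

lemma d3_cont: "s \<in> I \<Longrightarrow> isCont d3 s"
  unfolding d3_def[abs_def] by (intro continuous_intros X_cont Y_cont R0_cont R1_cont)

lemma u1_deriv: assumes "s \<in> I" shows "\<exists>d. (u1 has_real_derivative d) (at s)"
  unfolding u1_def[abs_def]
  apply (rule exI)
  apply (rule DERIV_add)
  apply (rule DERIV_mult)
  apply (rule DERIV_diff)
  apply (rule DERIV_const)
  apply (rule DERIV_mult)
  apply (rule u3_deriv[OF assms])
  apply (rule R0_deriv[OF assms])
  apply (rule Y_deriv[OF assms])
  apply (rule DERIV_mult)
  apply (rule DERIV_mult)
  apply (rule u3_deriv[OF assms])
  apply (rule R1_deriv[OF assms])
  apply (rule Y_deriv[OF assms])
  done
lemma u2_deriv: assumes "s \<in> I" shows "\<exists>d. (u2 has_real_derivative d) (at s)"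
  unfolding u2_def[abs_def]
  apply (rule exI)
  apply (rule DERIV_diff)
  apply (rule DERIV_mult)
  apply (rule DERIV_minus)
  apply (rule DERIV_diff)
  apply (rule DERIV_const)
  apply (rule DERIV_mult)
  apply (rule u3_deriv[OF assms])
  apply (rule R0_deriv[OF assms])
  apply (rule X_deriv[OF assms])
  apply (rule DERIV_mult)
  apply (rule DERIV_mult)
  apply (rule u3_deriv[OF assms])
  apply (rule R1_deriv[OF assms])
  apply (rule X_deriv[OF assms])
  done


lemma ident:
  assumes "s \<in> I"
  shows "u1 s * X 0 s + u2 s * Y 0 s + u3 s * R0 s = 1"
    "u1 s * X 1 s + u2 s * Y 1 s + u3 s * R1 s = 0"
    "u1 s * X 2 s + u2 s * Y 2 s + u3 s * R2 s = 0"
proof -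
  note h = ident_alg[OF R0_pos[OF assms] R0_sq bracket1[OF assms] R1_def[of s], of "R2 s" "p s" "u3 s" "u1 s" "u2 s"]
  have e: "R2 s = ((X 1 s)\<^sup>2 + (Y 1 s)\<^sup>2 + X 0 s * (- p s * X 0 s) + Y 0 s * (- p s * Y 0 s) - (R1 s)\<^sup>2) / R0 s"
    unfolding R2_def curvX[OF assms] curvY[OF assms] ..
  have f: "u3 s = - (- p s * X 0 s * X 0 s + - p s * Y 0 s * Y 0 s) * R0 s"
    unfolding u3_def curvX[OF assms] curvY[OF assms] ..
  note h = h[OF e f u1_def u2_def]
  show "u1 s * X 0 s + u2 s * Y 0 s + u3 s * R0 s = 1" by (rule h(1))
  show "u1 s * X 1 s + u2 s * Y 1 s + u3 s * R1 s = 0" by (rule h(2))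
  show "u1 s * X 2 s + u2 s * Y 2 s + u3 s * R2 s = 0" using h(3) unfolding curvX[OF assms] curvY[OF assms] .
qed


lemma trip_deriv:
  assumes "s \<in> I" "(u1 has_real_derivative e1) (at s)" "(u2 has_real_derivative e2) (at s)"
    "(A has_real_derivative A') (at s)" "(B has_real_derivative B') (at s)" "(C has_real_derivative C') (at s)"
  shows "((\<lambda>x. u1 x * A x + u2 x * B x + u3 x * C x) has_real_derivative
     (e1 * A s + u1 s * A') + (e2 * B s + u2 s * B') + (d3 s * C s + u3 s * C')) (at s)"
  by (rule DERIV_cong[OF DERIV_add[OF DERIV_add[OF DERIV_mult[OF assms(2,4)] DERIV_mult[OF assms(3,5)]]
        DERIV_mult[OF u3_deriv[OF assms(1)] assms(6)]]]) (simp add: algebra_simps)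

lemma dd:
  assumes "s \<in> I" "(u1 has_real_derivative e1) (at s)" "(u2 has_real_derivative e2) (at s)"
  shows "e1 = - d3 s * X 0 s / R0 s" "e2 = - d3 s * Y 0 s / R0 s"
    "d3 s = 0 \<Longrightarrow> u1 s * X 3 s + u2 s * Y 3 s + u3 s * R3 s = 0"
proof -
  have D1: "(e1 * X 0 s + u1 s * X 1 s) + (e2 * Y 0 s + u2 s * Y 1 s) + (d3 s * R0 s + u3 s * R1 s) = 0"
    using deriv_const_on_open[OF I_open assms(1) ident(1) trip_deriv[OF assms X_deriv[OF assms(1), of 0] Y_deriv[OF assms(1), of 0] R0_deriv[OF assms(1)]]]
    by (simp add: numeral_2_eq_2 numeral_3_eq_3)
  have D2: "(e1 * X 1 s + u1 s * X 2 s) + (e2 * Y 1 s + u2 s * Y 2 s) + (d3 s * R1 s + u3 s * R2 s) = 0"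
    using deriv_const_on_open[OF I_open assms(1) ident(2) trip_deriv[OF assms X_deriv[OF assms(1), of 1] Y_deriv[OF assms(1), of 1] R1_deriv[OF assms(1)]]]
    by (simp add: numeral_2_eq_2 numeral_3_eq_3)
  have D3: "(e1 * X 2 s + u1 s * X 3 s) + (e2 * Y 2 s + u2 s * Y 3 s) + (d3 s * R2 s + u3 s * R3 s) = 0"
    using deriv_const_on_open[OF I_open assms(1) ident(3) trip_deriv[OF assms X_deriv[OF assms(1), of 2] Y_deriv[OF assms(1), of 2] R2_deriv[OF assms(1)]]]
    by (simp add: numeral_2_eq_2 numeral_3_eq_3)
  have E1: "e1 * X 0 s + e2 * Y 0 s + d3 s * R0 s = 0" using D1 ident(2)[OF assms(1)] by (simp add: algebra_simps)
  have E2: "e1 * X 1 s + e2 * Y 1 s + d3 s * R1 s = 0" using D2 ident(3)[OF assms(1)] by (simp add: algebra_simps)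
  have rr: "R0 s * R0 s = X 0 s * X 0 s + Y 0 s * Y 0 s" using R0_sq[of s] by (simp add: power2_eq_square)
  note h = d_alg[OF R0_pos[OF assms(1)] bracket1[OF assms(1)] R1_def[of s] E1 E2 rr]
  show "e1 = - d3 s * X 0 s / R0 s" by (rule h(1))
  show "e2 = - d3 s * Y 0 s / R0 s" by (rule h(2))
  assume "d3 s = 0"
  then have "e1 = 0" "e2 = 0" using h by auto
  then show "u1 s * X 3 s + u2 s * Y 3 s + u3 s * R3 s = 0" using D3 \<open>d3 s = 0\<close> by simp
qed


definition RR :: "nat \<Rightarrow> real \<Rightarrow> real" where "RR k s = (if k = 0 then R0 s else if k = 1 then R1 s else if k = 2 then R2 s else R3 s)"
definition Lg :: "real \<Rightarrow> real \<Rightarrow> real \<Rightarrow> nat \<Rightarrow> real \<Rightarrow> real" where "Lg a b c k s = (if k = 0 then 1 else 0) - (a * X k s + b * Y k s + c * RR k s)"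

lemma RR_deriv: assumes "s \<in> I" "k < 3" shows "(RR k has_real_derivative RR (Suc k) s) (at s)"
proof -
  have "k = 0 \<or> k = 1 \<or> k = 2" using assms(2) by auto
  moreover have "RR 0 = R0" "RR 1 = R1" "RR 2 = R2" "RR 3 = R3" by (auto simp: RR_def[abs_def])
  ultimately show ?thesis using R0_deriv[OF assms(1)] R1_deriv[OF assms(1)] R2_deriv[OF assms(1)]
    by (auto simp: numeral_2_eq_2 numeral_3_eq_3)
qed

lemma Lg_deriv: assumes "s \<in> I" "k < 3" shows "(Lg a b c k has_real_derivative Lg a b c (Suc k) s) (at s)"
proof -
  have "((\<lambda>s. (if k = 0 then 1 else 0) - (a * X k s + b * Y k s + c * RR k s)) has_real_derivative
     0 - (a * X (Suc k) s + b * Y (Suc k) s + c * RR (Suc k) s)) (at s)"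
    by (intro DERIV_diff DERIV_const DERIV_add DERIV_cmult X_deriv Y_deriv RR_deriv assms)
  then show ?thesis unfolding Lg_def[abs_def] by simp
qed

definition PF :: "real \<Rightarrow> real \<Rightarrow> real \<Rightarrow> nat \<Rightarrow> real \<Rightarrow> real" where "PF a b c k s = (let G = (\<lambda>j. Lg a b c j s); H = (\<lambda>j. Lg a b (-c) j s) in
   (if k = 0 then G 0 * H 0 else if k = 1 then G 1 * H 0 + G 0 * H 1
    else if k = 2 then G 2 * H 0 + 2 * G 1 * H 1 + G 0 * H 2
    else G 3 * H 0 + 3 * G 2 * H 1 + 3 * G 1 * H 2 + G 0 * H 3))"

lemma prod_deriv:
  assumes "s \<in> I" "i < 3" "j < 3"
  shows "((\<lambda>x. Lg a b c i x * Lg a b (-c) j x) has_real_derivative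
    Lg a b c (Suc i) s * Lg a b (-c) j s + Lg a b c i s * Lg a b (-c) (Suc j) s) (at s)"
  by (rule DERIV_cong[OF DERIV_mult[OF Lg_deriv[OF assms(1,2)] Lg_deriv[OF assms(1,3)]]]) simp

lemma alg3: "((g3::real)*h0 + g2*h1 + 2*(g2*h1 + g1*h2)) + (g1*h2 + g0*h3) = g3*h0 + 3*g2*h1 + 3*g1*h2 + g0*h3"
  by (simp add: algebra_simps)


lemma e0: "PF a b c 0 = (\<lambda>x. Lg a b c 0 x * Lg a b (-c) 0 x)" by (simp add: PF_def[abs_def])
lemma e1: "PF a b c 1 = (\<lambda>x. Lg a b c 1 x * Lg a b (-c) 0 x + Lg a b c 0 x * Lg a b (-c) 1 x)" by (simp add: PF_def[abs_def])
lemma e2: "PF a b c 2 = (\<lambda>x. Lg a b c 2 x * Lg a b (-c) 0 x + 2 * (Lg a b c 1 x * Lg a b (-c) 1 x) + Lg a b c 0 x * Lg a b (-c) 2 x)" by (simp add: PF_def[abs_def] mult.assoc)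
lemma e3: "PF a b c 3 s = Lg a b c 3 s * Lg a b (-c) 0 s + 3 * Lg a b c 2 s * Lg a b (-c) 1 s + 3 * Lg a b c 1 s * Lg a b (-c) 2 s + Lg a b c 0 s * Lg a b (-c) 3 s" by (simp_all add: PF_def)

lemma PFd0: assumes "s \<in> I" shows "(PF a b c 0 has_real_derivative PF a b c 1 s) (at s)"
  unfolding e0 by (rule DERIV_cong[OF prod_deriv[OF assms(1), of 0 0]]) (simp_all add: PF_def)
lemma PFd1: assumes "s \<in> I" shows "(PF a b c 1 has_real_derivative PF a b c 2 s) (at s)"
  unfolding e1 by (rule DERIV_cong[OF DERIV_add[OF prod_deriv[OF assms(1), of 1 0] prod_deriv[OF assms(1), of 0 1]]])
      (simp_all add: PF_def numeral_2_eq_2)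
lemma PFd2: assumes "s \<in> I" shows "(PF a b c 2 has_real_derivative PF a b c 3 s) (at s)"
  unfolding e2 e3 by (rule DERIV_cong[OF DERIV_add[OF DERIV_add[OF prod_deriv[OF assms(1), of 2 0] DERIV_cmult[OF prod_deriv[OF assms(1), of 1 1]]] prod_deriv[OF assms(1), of 0 2]]])
      (simp_all add: numeral_2_eq_2 numeral_3_eq_3 alg3)

lemma sqdiff: "(A::real)^2 - c^2 * r^2 = (A - c*r) * (A - (-c)*r)"
  by (simp add: power2_eq_square algebra_simps)

lemma PF_deriv: assumes "s \<in> I" "k < 3" shows "(PF a b c k has_real_derivative PF a b c (Suc k) s) (at s)"
proof -
  have "k = 0 \<or> k = 1 \<or> k = 2" using assms(2) by auto
  moreover have "PF a b c (Suc 0) = PF a b c 1" "PF a b c (Suc 1) = PF a b c 2" "PF a b c (Suc 2) = PF a b c 3" by (simp_all add: numeral_2_eq_2 numeral_3_eq_3)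
  ultimately show ?thesis using PFd0[OF assms(1)] PFd1[OF assms(1)] PFd2[OF assms(1)]
    by (elim disjE) simp_all
qed

lemma gamma_XY: "\<gamma> s = (X 0 s, Y 0 s)"
  by (simp add: X_def Y_def)

lemma Lg0: "Lg a b c 0 s = 1 - a * X 0 s - b * Y 0 s - c * R0 s"
  by (simp add: Lg_def RR_def)

lemma kp_PF0: "kepler_poly (a, b, c) (\<gamma> s) = PF a b c 0 s"
proof -
  have "kepler_poly (a, b, c) (\<gamma> s) = (1 - a * X 0 s - b * Y 0 s)^2 - c^2 * (X 0 s ^2 + Y 0 s ^2)"
    by (simp add: gamma_XY kepler_poly_def)
  also have "\<dots> = (1 - a * X 0 s - b * Y 0 s)^2 - c^2 * (R0 s)^2" by (simp only: R0_sq)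
  also have "\<dots> = (1 - a * X 0 s - b * Y 0 s - c * R0 s) * (1 - a * X 0 s - b * Y 0 s - (-c) * R0 s)"
    by (rule sqdiff)
  also have "\<dots> = PF a b c 0 s" by (simp only: Lg0 e0)
  finally show ?thesis .
qed

lemma vder_kp: assumes "s \<in> I" "k \<le> 3" shows "vder k (\<lambda>s. kepler_poly (a, b, c) (\<gamma> s)) s = PF a b c k s"
  using assms
proof (induction k arbitrary: s)
  case 0 then show ?case using kp_PF0 by simp
next
  case (Suc k)
  have k: "k < 3" using Suc.prems(2) by simp
  have IH: "\<And>s. s \<in> I \<Longrightarrow> vder k (\<lambda>s. kepler_poly (a, b, c) (\<gamma> s)) s = PF a b c k s"
    using Suc.IH k by simp
  show ?case
    by (rule vder_step[OF I_open IH PF_deriv[OF _ k] Suc.prems(1)])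
qed

lemma r2_id: assumes "s \<in> I" shows "R2 s * (R0 s)^3 = 1 - p s * (R0 s)^4"
proof -
  have e: "R2 s = ((X 1 s)\<^sup>2 + (Y 1 s)\<^sup>2 + X 0 s * (- p s * X 0 s) + Y 0 s * (- p s * Y 0 s) - (R1 s)\<^sup>2) / R0 s"
    unfolding R2_def curvX[OF assms] curvY[OF assms] ..
  show ?thesis by (rule r2_alg[OF R0_pos[OF assms] R0_sq bracket1[OF assms] R1_def[of s] e])
qed

lemma uniq:
  assumes "s \<in> I" "w1 * X 0 s + w2 * Y 0 s + w3 * R0 s = 1"
    "w1 * X 1 s + w2 * Y 1 s + w3 * R1 s = 0" "w1 * X 2 s + w2 * Y 2 s + w3 * R2 s = 0"
  shows "w1 = u1 s \<and> w2 = u2 s \<and> w3 = u3 s"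
proof -
  note id = ident[OF assms(1)]
  have E1: "(w1 - u1 s) * X 0 s + (w2 - u2 s) * Y 0 s + (w3 - u3 s) * R0 s = 0"
    using assms(2) id(1) by (simp add: algebra_simps)
  have E2: "(w1 - u1 s) * X 1 s + (w2 - u2 s) * Y 1 s + (w3 - u3 s) * R1 s = 0"
    using assms(3) id(2) by (simp add: algebra_simps)
  have E3: "(w1 - u1 s) * X 2 s + (w2 - u2 s) * Y 2 s + (w3 - u3 s) * R2 s = 0"
    using assms(4) id(3) by (simp add: algebra_simps)
  have E3': "(w1 - u1 s) * (- p s * X 0 s) + (w2 - u2 s) * (- p s * Y 0 s) + (w3 - u3 s) * R2 s = 0"
    using E3 unfolding curvX[OF assms(1)] curvY[OF assms(1)] .
  have z: "w3 - u3 s = 0" by (rule uniq_alg[OF R0_pos[OF assms(1)] E1 E3' r2_id[OF assms(1)]])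
  have rr: "R0 s * R0 s = X 0 s * X 0 s + Y 0 s * Y 0 s" using R0_sq[of s] by (simp add: power2_eq_square)
  note h = d_alg[OF R0_pos[OF assms(1)] bracket1[OF assms(1)] R1_def[of s] E1 E2 rr]
  show ?thesis using h z by simp
qed

lemma u3_eq: assumes "s \<in> I" shows "u3 s = p s * (R0 s)^3"
proof -
  have "u3 s = p s * (X 0 s * X 0 s + Y 0 s * Y 0 s) * R0 s"
    unfolding u3_def curvX[OF assms] curvY[OF assms] by (simp add: algebra_simps)
  also have "\<dots> = p s * (R0 s)^3" using R0_sq[of s] by (simp add: power2_eq_square power3_eq_cube)
  finally show ?thesis .
qed

lemma u3_nz: assumes "s \<in> I" shows "u3 s \<noteq> 0"
proof -
  have "p s \<noteq> 0" "R0 s > 0" using pnz R0_pos assms by auto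
  then show ?thesis using u3_eq[OF assms] by simp
qed

lemma Lg_simps:
  "Lg a b c 0 s = 1 - (a * X 0 s + b * Y 0 s + c * R0 s)"
  "Lg a b c 1 s = - (a * X 1 s + b * Y 1 s + c * R1 s)"
  "Lg a b c 2 s = - (a * X 2 s + b * Y 2 s + c * R2 s)"
  "Lg a b c 3 s = - (a * X 3 s + b * Y 3 s + c * R3 s)"
  by (simp_all add: Lg_def RR_def)

lemma osc_u:
  assumes "s \<in> I" "c > 0" "kepler_contact (a, b, c) \<gamma> s 2"
  shows "a = u1 s \<and> b = u2 s \<and> (c = u3 s \<or> -c = u3 s)"
proof -
  have P: "PF a b c k s = 0" if "k \<le> 2" for k
    using assms(3) that vder_kp[OF assms(1), of k a b c] unfolding kepler_contact_def by auto
  define g0 g1 g2 h0 h1 h2 where "g0 = Lg a b c 0 s" "g1 = Lg a b c 1 s" "g2 = Lg a b c 2 s"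
    "h0 = Lg a b (-c) 0 s" "h1 = Lg a b (-c) 1 s" "h2 = Lg a b (-c) 2 s"
  have P0: "g0 * h0 = 0" using P[of 0] unfolding g0_g1_g2_h0_h1_h2_def by (simp add: PF_def)
  have P1: "g1 * h0 + g0 * h1 = 0" using P[of 1] unfolding g0_g1_g2_h0_h1_h2_def by (simp add: PF_def)
  have P2: "g2 * h0 + 2 * g1 * h1 + g0 * h2 = 0" using P[of 2] unfolding g0_g1_g2_h0_h1_h2_def by (simp add: PF_def)
  have diff: "h0 - g0 = 2 * c * R0 s" unfolding g0_g1_g2_h0_h1_h2_def Lg_simps by (simp add: algebra_simps)
  have pos: "2 * c * R0 s > 0" using assms(2) R0_pos[OF assms(1)] by simp
  consider "g0 = 0" "h0 \<noteq> 0" | "h0 = 0" "g0 \<noteq> 0" using P0 diff pos by auto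
  then show ?thesis
  proof cases
    case 1
    have "g1 = 0" using P1 1 by simp
    moreover have "g2 = 0" using P2 1 \<open>g1 = 0\<close> by simp
    ultimately have "a = u1 s \<and> b = u2 s \<and> c = u3 s"
      using 1 uniq[OF assms(1), of a b c] unfolding g0_g1_g2_h0_h1_h2_def Lg_simps by simp
    then show ?thesis by simp
  next
    case 2
    have "h1 = 0" using P1 2 by simp
    moreover have "h2 = 0" using P2 2 \<open>h1 = 0\<close> by simp
    ultimately have "a = u1 s \<and> b = u2 s \<and> -c = u3 s"
      using 2 uniq[OF assms(1), of a b "-c"] unfolding g0_g1_g2_h0_h1_h2_def Lg_simps by simp
    then show ?thesis by simp
  qed
qed

lemma PF_zero:
  assumes "(\<forall>k\<le>3. Lg a b c k s = 0) \<or> (\<forall>k\<le>3. Lg a b (-c) k s = 0)" "k \<le> 3"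
  shows "PF a b c k s = 0"
proof -
  have "k = 0 \<or> k = 1 \<or> k = 2 \<or> k = 3" using assms(2) by auto
  then show ?thesis using assms(1) unfolding PF_def Let_def by auto
qed

lemma d3_nz: assumes "s \<in> I" shows "d3 s \<noteq> 0"
proof
  assume d0: "d3 s = 0"
  obtain e1 e2 where e: "(u1 has_real_derivative e1) (at s)" "(u2 has_real_derivative e2) (at s)"
    using u1_deriv[OF assms] u2_deriv[OF assms] by blast
  have L3: "u1 s * X 3 s + u2 s * Y 3 s + u3 s * R3 s = 0" using dd(3)[OF assms e d0] .
  note id = ident[OF assms]
  have Z: "\<forall>k\<le>3. Lg (u1 s) (u2 s) (u3 s) k s = 0"
  proof (intro allI impI)
    fix k :: nat assume "k \<le> 3"
    then have "k = 0 \<or> k = 1 \<or> k = 2 \<or> k = 3" by auto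
    then show "Lg (u1 s) (u2 s) (u3 s) k s = 0" using id L3 by (auto simp: Lg_def RR_def)
  qed
  have "u3 s > 0 \<or> u3 s < 0" using u3_nz[OF assms] by linarith
  then show False
  proof
    assume pos: "u3 s > 0"
    have "kepler_contact (u1 s, u2 s, u3 s) \<gamma> s 3"
      unfolding kepler_contact_def using vder_kp[OF assms] PF_zero Z by simp
    then have "hyperosculating_kepler (u1 s, u2 s, u3 s) \<gamma> s"
      unfolding hyperosculating_kepler_def using pos by simp
    then show False using nohyp assms by blast
  next
    assume neg: "u3 s < 0"
    have Z': "\<forall>k\<le>3. Lg (u1 s) (u2 s) (- (- u3 s)) k s = 0" using Z by simp
    have "kepler_contact (u1 s, u2 s, - u3 s) \<gamma> s 3"
      unfolding kepler_contact_def using vder_kp[OF assms] PF_zero[OF disjI2[OF Z']] by simp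
    then have "hyperosculating_kepler (u1 s, u2 s, - u3 s) \<gamma> s"
      unfolding hyperosculating_kepler_def using neg by simp
    then show False using nohyp assms by blast
  qed
qed

lemma align_false:
  assumes "a < b" "{a<..<b} \<subseteq> I" "\<not> (x = 0 \<and> y = 0)"
    "\<forall>s\<in>{a<..<b}. X 0 s * x + Y 0 s * y = R0 s * sqrt (x^2 + y^2)"
  shows False
proof -
  have H: "X 0 s * y - Y 0 s * x = 0" if "s \<in> {a<..<b}" for s
  proof -
    have "(X 0 s * x + Y 0 s * y)^2 + (X 0 s * y - Y 0 s * x)^2 = (R0 s)^2 * (x^2+y^2)"
      unfolding lagrange R0_sq ..
    also have "\<dots> = (R0 s * sqrt (x^2 + y^2))^2" by (simp add: power_mult_distrib)
    also have "\<dots> = (X 0 s * x + Y 0 s * y)^2" using assms(4) that by simp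
    finally show ?thesis by simp
  qed
  define s0 where "s0 = (a + b) / 2"
  have s0: "s0 \<in> {a<..<b}" using assms(1) unfolding s0_def by auto
  then have s0I: "s0 \<in> I" using assms(2) by auto
  have D: "((\<lambda>s. X 0 s * y - Y 0 s * x) has_real_derivative X 1 s0 * y - Y 1 s0 * x) (at s0)"
    by (rule DERIV_cong[OF DERIV_diff[OF DERIV_mult[OF X_deriv[OF s0I, of 0] DERIV_const[of y]]
          DERIV_mult[OF Y_deriv[OF s0I, of 0] DERIV_const[of x]]]]) simp
  have "X 1 s0 * y - Y 1 s0 * x = 0"
    by (rule deriv_const_on_open[OF _ s0 H D]) simp
  then have "x = 0 \<and> y = 0" using xy_zero[OF H[OF s0] _ bracket1[OF s0I]] by simp
  then show False using assms(3) by simp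
qed

lemma Qp_deriv: assumes "s \<in> I"
  shows "((\<lambda>s. u1 s * x + u2 s * y + u3 s * \<rho>) has_real_derivative d3 s * (\<rho> - (X 0 s * x + Y 0 s * y) / R0 s)) (at s)"
proof -
  obtain e1 e2 where e: "(u1 has_real_derivative e1) (at s)" "(u2 has_real_derivative e2) (at s)"
    using u1_deriv[OF assms] u2_deriv[OF assms] by blast
  have r: "R0 s \<noteq> 0" using R0_pos[OF assms] by simp
  show ?thesis
    by (rule DERIV_cong[OF DERIV_add[OF DERIV_add[OF DERIV_cmult_right[OF e(1)] DERIV_cmult_right[OF e(2)]] DERIV_cmult_right[OF u3_deriv[OF assms]]]])
      (simp only: dd(1,2)[OF assms e] qalg[OF r])
qed

lemma Qm_deriv: assumes "s \<in> I"
  shows "((\<lambda>s. u1 s * x + u2 s * y - u3 s * \<rho>) has_real_derivative - d3 s * (\<rho> + (X 0 s * x + Y 0 s * y) / R0 s)) (at s)"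
proof -
  obtain e1 e2 where e: "(u1 has_real_derivative e1) (at s)" "(u2 has_real_derivative e2) (at s)"
    using u1_deriv[OF assms] u2_deriv[OF assms] by blast
  have r: "R0 s \<noteq> 0" using R0_pos[OF assms] by simp
  show ?thesis
    by (rule DERIV_cong[OF DERIV_diff[OF DERIV_add[OF DERIV_cmult_right[OF e(1)] DERIV_cmult_right[OF e(2)]] DERIV_cmult_right[OF u3_deriv[OF assms]]]])
      (simp only: dd(1,2)[OF assms e] qalg2[OF r])
qed


lemma cs_bound: assumes "s \<in> I"
  shows "\<bar>(X 0 s * x + Y 0 s * y) / R0 s\<bar> \<le> sqrt (x^2 + y^2)"
  by (rule cs_gen[OF R0_pos[OF assms] R0_sq])

lemma sub_I: assumes "t1 \<in> I" "t2 \<in> I" shows "{t1..t2} \<subseteq> I"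
  using mem_is_interval_1_I[OF I_interval assms(1) assms(2)] by auto

lemma not_all_zero:
  assumes "t1 < t2" "{t1..t2} \<subseteq> I" "\<not> (x = 0 \<and> y = 0)" "\<tau> = 1 \<or> \<tau> = -1"
  shows "\<exists>s\<in>{t1<..<t2}. sqrt (x^2+y^2) - \<tau> * ((X 0 s * x + Y 0 s * y) / R0 s) \<noteq> 0"
proof (rule ccontr)
  assume "\<not> ?thesis"
  then have h: "\<forall>s\<in>{t1<..<t2}. sqrt (x^2+y^2) = \<tau> * ((X 0 s * x + Y 0 s * y) / R0 s)" by auto
  have sub: "{t1<..<t2} \<subseteq> I" using assms(2) by auto
  have nz': "\<not> (\<tau>*x = 0 \<and> \<tau>*y = 0)" using assms(3,4) by auto
  have sq: "sqrt ((\<tau>*x)^2+(\<tau>*y)^2) = sqrt (x^2+y^2)" using assms(4) by (auto simp: power_mult_distrib)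
  have "\<forall>s\<in>{t1<..<t2}. X 0 s * (\<tau>*x) + Y 0 s * (\<tau>*y) = R0 s * sqrt ((\<tau>*x)^2+(\<tau>*y)^2)"
  proof
    fix s assume s: "s \<in> {t1<..<t2}"
    then have r: "R0 s > 0" using R0_pos sub by auto
    have "R0 s * sqrt ((\<tau>*x)^2+(\<tau>*y)^2) = R0 s * (\<tau> * ((X 0 s * x + Y 0 s * y) / R0 s))"
      using h s sq by simp
    also have "\<dots> = X 0 s * (\<tau>*x) + Y 0 s * (\<tau>*y)" using r by (simp add: field_simps)
    finally show "X 0 s * (\<tau>*x) + Y 0 s * (\<tau>*y) = R0 s * sqrt ((\<tau>*x)^2+(\<tau>*y)^2)" by simp
  qed
  then show False using align_false[OF assms(1) sub nz'] by blast
qed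

lemma mono_Q:
  assumes "t1 < t2" "{t1..t2} \<subseteq> I" "\<not> (x = 0 \<and> y = 0)" "\<tau> = 1 \<or> \<tau> = -1" "\<sigma> = 1 \<or> \<sigma> = -1"
    "\<forall>s\<in>{t1..t2}. \<sigma> * \<tau> * d3 s > 0"
  shows "\<sigma> * (u1 t1 * x + u2 t1 * y + u3 t1 * (\<tau> * sqrt (x^2+y^2))) < \<sigma> * (u1 t2 * x + u2 t2 * y + u3 t2 * (\<tau> * sqrt (x^2+y^2)))"
proof -
  define \<rho> where "\<rho> = sqrt (x^2+y^2)"
  define c where "c s = (X 0 s * x + Y 0 s * y) / R0 s" for s
  have key: "\<sigma> * (d3 s * (\<tau>*\<rho> - c s)) = (\<sigma>*\<tau>*d3 s) * (\<rho> - \<tau>*c s)" for s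
    using assms(4) by (auto simp: algebra_simps)
  show ?thesis unfolding \<rho>_def[symmetric]
  proof (rule strict_incr[OF assms(1), of "\<lambda>s. \<sigma> * (u1 s * x + u2 s * y + u3 s * (\<tau> * \<rho>))" "\<lambda>s. \<sigma> * (d3 s * (\<tau>*\<rho> - c s))"])
    fix s assume s: "s \<in> {t1..t2}"
    then have sI: "s \<in> I" using assms(2) by auto
    show "((\<lambda>s. \<sigma> * (u1 s * x + u2 s * y + u3 s * (\<tau> * \<rho>))) has_real_derivative \<sigma> * (d3 s * (\<tau>*\<rho> - c s))) (at s)"
      unfolding c_def by (rule DERIV_cmult[OF Qp_deriv[OF sI]])
    have b: "\<bar>c s\<bar> \<le> \<rho>" unfolding c_def \<rho>_def by (rule cs_bound[OF sI])
    have "\<rho> - \<tau>*c s \<ge> 0" using assms(4) b by auto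
    moreover have "\<sigma>*\<tau>*d3 s > 0" using assms(6) s by blast
    ultimately show "0 \<le> \<sigma> * (d3 s * (\<tau>*\<rho> - c s))" unfolding key by simp
  next
    obtain s where s: "s \<in> {t1<..<t2}" "\<rho> - \<tau> * c s \<noteq> 0"
      using not_all_zero[OF assms(1-4)] unfolding c_def \<rho>_def by blast
    have "\<sigma>*\<tau>*d3 s > 0" using assms(6) s(1) by auto
    then have A: "\<sigma>*\<tau>*d3 s \<noteq> 0" by linarith
    have "\<sigma> * (d3 s * (\<tau>*\<rho> - c s)) \<noteq> 0" using A s(2) unfolding key by auto
    then show "\<exists>s\<in>{t1<..<t2}. \<sigma> * (d3 s * (\<tau>*\<rho> - c s)) \<noteq> 0" using s(1) by blast
  qed
qed

lemma core:
  assumes "t1 \<in> I" "t2 \<in> I" "t1 < t2" "\<not> (x = 0 \<and> y = 0)"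
  shows "{u1 t1 * x + u2 t1 * y + u3 t1 * sqrt (x^2+y^2), u1 t1 * x + u2 t1 * y - u3 t1 * sqrt (x^2+y^2)} \<inter>
         {u1 t2 * x + u2 t2 * y + u3 t2 * sqrt (x^2+y^2), u1 t2 * x + u2 t2 * y - u3 t2 * sqrt (x^2+y^2)} = {}"
proof -
  define \<rho> where "\<rho> = sqrt (x^2+y^2)"
  have \<rho>: "\<rho> > 0" unfolding \<rho>_def using assms(4) by (auto simp: add_pos_nonneg add_nonneg_pos)
  have sub: "{t1..t2} \<subseteq> I" using sub_I[OF assms(1,2)] .
  have le: "t1 \<le> t2" using assms(3) by simp
  have dsgn: "(\<forall>s\<in>{t1..t2}. d3 s > 0) \<or> (\<forall>s\<in>{t1..t2}. d3 s < 0)"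
    by (rule const_sign[OF le continuous_at_imp_continuous_on]) (use sub d3_cont d3_nz in auto)
  have usgn: "(\<forall>s\<in>{t1..t2}. u3 s > 0) \<or> (\<forall>s\<in>{t1..t2}. u3 s < 0)"
    by (rule const_sign[OF le continuous_at_imp_continuous_on]) (use sub u3_cont u3_nz in auto)
  have t1i: "t1 \<in> {t1..t2}" and t2i: "t2 \<in> {t1..t2}" using le by auto
  note M = mono_Q[OF assms(3) sub assms(4), folded \<rho>_def]
  have mono: "(u1 t1 * x + u2 t1 * y + u3 t1 * \<rho> < u1 t2 * x + u2 t2 * y + u3 t2 * \<rho> \<and>
               u1 t2 * x + u2 t2 * y - u3 t2 * \<rho> < u1 t1 * x + u2 t1 * y - u3 t1 * \<rho>) \<or>
              (u1 t2 * x + u2 t2 * y + u3 t2 * \<rho> < u1 t1 * x + u2 t1 * y + u3 t1 * \<rho> \<and>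
               u1 t1 * x + u2 t1 * y - u3 t1 * \<rho> < u1 t2 * x + u2 t2 * y - u3 t2 * \<rho>)"
    using dsgn
  proof
    assume d: "\<forall>s\<in>{t1..t2}. d3 s > 0"
    have A: "1 * (u1 t1 * x + u2 t1 * y + u3 t1 * (1 * \<rho>)) < 1 * (u1 t2 * x + u2 t2 * y + u3 t2 * (1 * \<rho>))"
      by (rule M) (use d in auto)
    have B: "(-1) * (u1 t1 * x + u2 t1 * y + u3 t1 * ((-1) * \<rho>)) < (-1) * (u1 t2 * x + u2 t2 * y + u3 t2 * ((-1) * \<rho>))"
      by (rule M) (use d in auto)
    show ?thesis using A B by simp
  next
    assume d: "\<forall>s\<in>{t1..t2}. d3 s < 0"
    have A: "(-1) * (u1 t1 * x + u2 t1 * y + u3 t1 * (1 * \<rho>)) < (-1) * (u1 t2 * x + u2 t2 * y + u3 t2 * (1 * \<rho>))"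
      by (rule M) (use d in auto)
    have B: "1 * (u1 t1 * x + u2 t1 * y + u3 t1 * ((-1) * \<rho>)) < 1 * (u1 t2 * x + u2 t2 * y + u3 t2 * ((-1) * \<rho>))"
      by (rule M) (use d in auto)
    show ?thesis using A B by simp
  qed
  have us: "(u3 t1 * \<rho> > 0 \<and> u3 t2 * \<rho> > 0) \<or> (u3 t1 * \<rho> < 0 \<and> u3 t2 * \<rho> < 0)"
    using usgn t1i t2i \<rho> by (auto simp: mult_pos_pos mult_neg_pos)
  show ?thesis unfolding \<rho>_def[symmetric] using mono us by auto
qed

lemma in_K:
  assumes "s \<in> I" "osculating_kepler v \<gamma> s" "(x, y) \<in> kepler_conic v"
  shows "\<not> (x = 0 \<and> y = 0) \<and>
    1 \<in> {u1 s * x + u2 s * y + u3 s * sqrt (x^2+y^2), u1 s * x + u2 s * y - u3 s * sqrt (x^2+y^2)}"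
proof -
  obtain a b c where v: "v = (a, b, c)" by (cases v) auto
  have c: "c > 0" and kc: "kepler_contact (a, b, c) \<gamma> s 2"
    using assms(2) unfolding osculating_kepler_def v by auto
  have abc: "a = u1 s \<and> b = u2 s \<and> (c = u3 s \<or> -c = u3 s)" by (rule osc_u[OF assms(1) c kc])
  obtain z where z: "x^2 + y^2 = z^2" "a * x + b * y + c * z = 1"
    using assms(3) unfolding v kepler_conic_def by auto
  have nz: "\<not> (x = 0 \<and> y = 0)"
  proof
    assume "x = 0 \<and> y = 0"
    then have "z = 0" using z(1) by simp
    then show False using z(2) \<open>x = 0 \<and> y = 0\<close> by simp
  qed
  have "(sqrt (x^2+y^2))^2 = z^2" using z(1) by simp
  then have zz: "z = sqrt (x^2+y^2) \<or> z = - sqrt (x^2+y^2)" by (auto simp: power2_eq_iff)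
  have abc': "a = u1 s" "b = u2 s" "c = u3 s \<or> c = - u3 s" using abc by auto
  show ?thesis using nz zz z(2) abc' by auto
qed

end

theorem theorem3:
  fixes \<gamma> :: "real \<Rightarrow> real \<times> real" and p :: "real \<Rightarrow> real" and I :: "real set"
  assumes I_open: "open I" and I_interval: "is_interval I"
    and smooth: "smooth_curve_on I \<gamma>"
    and nonzero: "\<forall>t\<in>I. \<gamma> t \<noteq> 0"
    and centroaffine_param: "\<forall>t\<in>I. bracket (\<gamma> t) (vder 1 \<gamma> t) = 1"
    and curvature: "\<forall>t\<in>I. vder 2 \<gamma> t = - (p t) *\<^sub>R \<gamma> t"
    and curvature_nonzero: "\<forall>t\<in>I. p t \<noteq> 0"
    and no_hyperosc: "\<forall>t\<in>I. \<forall>v. \<not> hyperosculating_kepler v \<gamma> t"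
  shows "\<forall>t1\<in>I. \<forall>t2\<in>I. \<forall>v1 v2. t1 \<noteq> t2 \<and> osculating_kepler v1 \<gamma> t1 \<and> osculating_kepler v2 \<gamma> t2
           \<longrightarrow> kepler_conic v1 \<inter> kepler_conic v2 = {}"
proof -
  interpret kc \<gamma> p I using assms by (unfold_locales) auto
  have main: "False" if "t1 \<in> I" "t2 \<in> I" "t1 < t2" "osculating_kepler v1 \<gamma> t1" "osculating_kepler v2 \<gamma> t2"
      "(x, y) \<in> kepler_conic v1" "(x, y) \<in> kepler_conic v2" for t1 t2 v1 v2 x y
  proof -
    note A = in_K[OF that(1,4,6)] and B = in_K[OF that(2,5,7)]
    show False using core[OF that(1-3) conjunct1[OF A]] conjunct2[OF A] conjunct2[OF B] by blast
  qed
  show ?thesis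
  proof (intro ballI allI impI)
    fix t1 t2 v1 v2
    assume t: "t1 \<in> I" "t2 \<in> I" and h: "t1 \<noteq> t2 \<and> osculating_kepler v1 \<gamma> t1 \<and> osculating_kepler v2 \<gamma> t2"
    show "kepler_conic v1 \<inter> kepler_conic v2 = {}"
    proof (rule ccontr)
      assume "kepler_conic v1 \<inter> kepler_conic v2 \<noteq> {}"
      then obtain x y where xy: "(x, y) \<in> kepler_conic v1" "(x, y) \<in> kepler_conic v2" by auto
      have "t1 < t2 \<or> t2 < t1" using h by linarith
      then show False
      proof
        assume "t1 < t2" then show False using main[OF t _ _ _ xy] h by blast
      next
        assume "t2 < t1" then show False using main[OF t(2,1) _ _ _ xy(2,1)] h by blast
      qed
    qed
  qed
qed

end
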